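(* Let $a=b=p$ and $0\le c<p$, and let $r\ge p/2$. Then the optimal DMT of the half-duplex $(a,b,c)$-relay channel, even when the relay has global CSI, is at most $(p+c-2r)^+$, which equals the DMT $d_{QMF}(r)$ achieved by static QMF with equal listening and transmitting times. Consequently static QMF is DMT optimal for $r\ge p/2$ (under global CSI, and hence also under CSIR only).
   Context: The $(a,b,c)$-relay channel: source $S$, half-duplex relay $R$, destination $D$; source signal broadcast to $R$ and $D$, superposition at $D$; i.i.d. $\mathcal{CN}(0,1)$ quasi-static gains; average SNRs $\rho^a,\rho^b,\rho^c$ on S-R, R-D, S-D. Exponential orders $\alpha,\beta,\gamma$ of $|h_{sr}|^2\rho^a,|h_{rd}|^2\rho^b,|h_{sd}|^2\rho^c$ (e.g. $\alpha=\lim_{\rho\to\infty}\log(1+|h_{sr}|^2\rho^a)/\log\rho$). Let $r_{h.d.}(t)=\min\{t\max(\alpha,\gamma)+(1-t)\gamma,\ t\gamma+(1-t)\max(\beta,\gamma)\}$. The global-CSI DMT satisfies $d_{G\text{-}CSI}(r)\le\inf\{a+b+c-\alpha-\beta-\gamma:\max_{t\in[0,1]}r_{h.d.}(t)\le r,\ \alpha\in[0,a],\beta\in[0,b],\gamma\in[0,c]\}$. Static QMF: the relay listens for half the block, quantizes at noise level, maps to a random codeword and transmits in the other half; its DMT is $d_{QMF}(r)=\min\{a+b+c-\alpha-\beta-\gamma: r_{h.d.}(1/2)\le r,\ \alpha\in[0,a],\beta\in[0,b],\gamma\in[0,c]\}$, which for $c\le\min(a,b)$ equals $(\min(a,b)+c-2r)^+$.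 $x^+=\max(x,0)$. *)

theory Defs
  imports Complex_Main
begin

text \<open>Half-duplex achievable multiplexing gain r_{h.d.}(t) for exponential orders
  alpha, beta, gamma and listening fraction t.\<close>
definition rhd :: "real \<Rightarrow> real \<Rightarrow> real \<Rightarrow> real \<Rightarrow> real" where
  "rhd \<alpha> \<beta> \<gamma> t = min (t * max \<alpha> \<gamma> + (1 - t) * \<gamma>) (t * \<gamma> + (1 - t) * max \<beta> \<gamma>)"

definition dmt_gcsi_bound :: "real \<Rightarrow> real \<Rightarrow> real \<Rightarrow> real \<Rightarrow> real" where
  "dmt_gcsi_bound a b c r = Inf {a + b + c - \<alpha> - \<beta> - \<gamma> | \<alpha> \<beta> \<gamma>.
      (SUP t\<in>{0..1}. rhd \<alpha> \<beta> \<gamma> t) \<le> r \<and>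
      \<alpha> \<in> {0..a} \<and> \<beta> \<in> {0..b} \<and> \<gamma> \<in> {0..c}}"

definition d_qmf :: "real \<Rightarrow> real \<Rightarrow> real \<Rightarrow> real \<Rightarrow> real" where
  "d_qmf a b c r = Inf {a + b + c - \<alpha> - \<beta> - \<gamma> | \<alpha> \<beta> \<gamma>.
      rhd \<alpha> \<beta> \<gamma> (1/2) \<le> r \<and>
      \<alpha> \<in> {0..a} \<and> \<beta> \<in> {0..b} \<and> \<gamma> \<in> {0..c}}"

end

theory Submission
  imports Defs
begin

lemma rhd_le: assumes "\<gamma> \<le> p" shows "rhd p p \<gamma> t \<le> (p + \<gamma>) / 2"
  using assms unfolding rhd_def by (auto simp: algebra_simps min_def max_def)

lemma rhd_half: assumes "\<gamma> \<le> p" shows "rhd p p \<gamma> (1/2) = (p + \<gamma>) / 2"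
  using assms unfolding rhd_def by (auto simp: algebra_simps min_def max_def)

lemma sup_le: assumes "\<gamma> \<le> p" shows "(SUP t\<in>{0..1}. rhd p p \<gamma> t) \<le> (p + \<gamma>) / 2"
  by (rule cSUP_least) (use rhd_le[OF assms] in auto)

theorem lemma5:
  fixes p c r :: real
  assumes "0 \<le> c" and "c < p" and "p / 2 \<le> r"
  shows "dmt_gcsi_bound p p c r \<le> max (p + c - 2 * r) 0
         \<and> d_qmf p p c r = max (p + c - 2 * r) 0"
proof -
  define g where "g = (if p + c \<le> 2 * r then c else 2 * r - p)"
  have g: "0 \<le> g" "g \<le> c" "g \<le> p" "(p + g)/2 \<le> r"
    "p + p + c - p - p - g = max (p + c - 2 * r) 0"
    using assms by (auto simp: g_def)
  define S where "S = {p + p + c - \<alpha> - \<beta> - \<gamma> | \<alpha> \<beta> \<gamma>.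
      (SUP t\<in>{0..1}. rhd \<alpha> \<beta> \<gamma> t) \<le> r \<and>
      \<alpha> \<in> {0..p} \<and> \<beta> \<in> {0..p} \<and> \<gamma> \<in> {0..c}}"
  define Q where "Q = {p + p + c - \<alpha> - \<beta> - \<gamma> | \<alpha> \<beta> \<gamma>.
      rhd \<alpha> \<beta> \<gamma> (1/2) \<le> r \<and>
      \<alpha> \<in> {0..p} \<and> \<beta> \<in> {0..p} \<and> \<gamma> \<in> {0..c}}"
  have sup: "(SUP t\<in>{0..1}. rhd p p g t) \<le> r"
    using sup_le[OF g(3)] g(4) by linarith
  have inS: "max (p + c - 2 * r) 0 \<in> S"
    unfolding S_def using g sup assms
    by (intro CollectI exI[of _ p] exI[of _ g]) auto
  have bS: "bdd_below S" unfolding S_def bdd_below_def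
    by (rule exI[of _ 0]) auto
  have inQ: "max (p + c - 2 * r) 0 \<in> Q"
    unfolding Q_def using g assms rhd_half[OF g(3)]
    by (intro CollectI exI[of _ p] exI[of _ g]) auto
  have lb: "\<forall>x\<in>Q. max (p + c - 2 * r) 0 \<le> x"
  proof
    fix x assume "x \<in> Q"
    then obtain \<alpha> \<beta> \<gamma> where x: "x = p + p + c - \<alpha> - \<beta> - \<gamma>"
      and h: "rhd \<alpha> \<beta> \<gamma> (1/2) \<le> r" "\<alpha> \<in> {0..p}" "\<beta> \<in> {0..p}" "\<gamma> \<in> {0..c}"
      unfolding Q_def by blast
    have "\<alpha> + \<gamma> \<le> 2 * r \<or> \<beta> + \<gamma> \<le> 2 * r"
      using h(1) unfolding rhd_def by (auto simp: min_def max_def split: if_splits)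
    then show "max (p + c - 2 * r) 0 \<le> x" using x h by auto
  qed
  have "Inf S \<le> max (p + c - 2 * r) 0" by (rule cInf_lower[OF inS bS])
  moreover have "Inf Q = max (p + c - 2 * r) 0"
  proof (rule antisym)
    show "Inf Q \<le> max (p + c - 2 * r) 0"
      by (rule cInf_lower[OF inQ]) (use lb in \<open>auto simp: bdd_below_def\<close>)
    show "max (p + c - 2 * r) 0 \<le> Inf Q"
      by (rule cInf_greatest) (use inQ lb in auto)
  qed
  ultimately show ?thesis unfolding dmt_gcsi_bound_def d_qmf_def S_def Q_def by simp
qed

end
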